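(* Let $p$ be an odd prime, $t,s$ positive integers with $p\nmid s$, $r=p^t$, $q=r^s$. Let $\varphi$ be a nontrivial multiplicative character of $\mathbb{F}_q$, and let $\overline{\varphi}^*$ denote the restriction of $\overline{\varphi}$ to $\mathbb{F}_r^*$. Put $$B=\sum_{x\in\mathbb{F}_q^*,\ \mathrm{Tr}_{q/r}(x+1)=0}\varphi(x).$$ Then $|B|=\sqrt{q}/\sqrt{r}$ if $\overline{\varphi}^*$ is nontrivial, and $|B|=\sqrt{q}/r$ if $\overline{\varphi}^*$ is trivial.
   Context: $\mathrm{Tr}_{q/r}$ is the trace map from $\mathbb{F}_q$ to $\mathbb{F}_r$. A multiplicative character of $\mathbb{F}_q$ is a homomorphism $\mathbb{F}_q^*\to\mathbb{C}^*$; $\overline{\varphi}$ is its complex conjugate; it is trivial if identically $1$. *)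

theory Defs
  imports Complex_Main "HOL-Computational_Algebra.Primes"
begin

text \<open>The finite field F_q is modelled by a finite field type 'a with CARD('a) = q.
The subfield F_r (r = p^t, r^s = q) is the set of fixed points of x \<mapsto> x^r.\<close>

definition subfield_of_order :: "nat \<Rightarrow> 'a::field set" where
  "subfield_of_order r = {x. x ^ r = x}"

definition trace_map :: "nat \<Rightarrow> nat \<Rightarrow> 'a::field \<Rightarrow> 'a" where
  "trace_map r s x = (\<Sum>i<s. x ^ (r ^ i))"

text \<open>A multiplicative character: a homomorphism F_q^* \<rightarrow> C^* (only values on nonzero
elements matter).\<close>
definition mult_char :: "('a::field \<Rightarrow> complex) \<Rightarrow> bool" where
  "mult_char \<phi> \<longleftrightarrow> (\<forall>x y. x \<noteq> 0 \<longrightarrow> y \<noteq> 0 \<longrightarrow> \<phi> (x * y) = \<phi> x * \<phi> y)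
                   \<and> (\<forall>x. x \<noteq> 0 \<longrightarrow> \<phi> x \<noteq> 0)"

definition trivial_char_on :: "'a set \<Rightarrow> ('a \<Rightarrow> complex) \<Rightarrow> bool" where
  "trivial_char_on S \<phi> \<longleftrightarrow> (\<forall>x\<in>S. \<phi> x = 1)"

end

theory Submission
  imports Defs "HOL-Number_Theory.Residues" "HOL-Computational_Algebra.Polynomial" "HOL-Library.Product_Plus"
begin

lemma ff_power_card:
  fixes x :: "'a :: {finite,field}"
  shows "x ^ card (UNIV :: 'a set) = x"
proof (cases "x = 0")
  case False
  have "x * (\<Prod>y\<in>UNIV-{0}. x * y) = x * x ^ (card (UNIV :: 'a set) - 1) * \<Prod>(UNIV-{0})"
    by (simp add: prod.distrib mult_ac)
  also have "x * x ^ (card (UNIV :: 'a set) - 1) = x ^ Suc (card (UNIV :: 'a set) - 1)"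
    by (subst power_Suc) auto
  also have "Suc (card (UNIV :: 'a set) - 1) = card (UNIV :: 'a set)"
    using finite_UNIV_card_ge_0[where ?'a = 'a] by simp
  also have "(\<Prod>y\<in>UNIV-{0}. x * y) = (\<Prod>y\<in>UNIV-{0}. y)"
    by (rule prod.reindex_bij_witness[of _ "\<lambda>y. y / x" "\<lambda>y. x * y"]) (use False in auto)
  finally show ?thesis
    by simp
qed (use finite_UNIV_card_ge_0[where ?'a = 'a] in auto)

lemma ff_char:
  fixes p n :: nat
  assumes "prime p" "card (UNIV :: 'a::{finite,field} set) = p ^ n"
  shows "CHAR('a) = p"
proof -
  have pos: "CHAR('a) > 0" by (simp add: finite_imp_CHAR_pos)
  have pr: "prime CHAR('a)" using pos prime_CHAR_semidom by blast
  have "CHAR('a) dvd p ^ n" using CHAR_dvd_CARD[where 'a='a] assms(2) by simp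
  hence "CHAR('a) dvd p" using pr prime_dvd_power by blast
  thus ?thesis using pr assms(1) by (simp add: primes_dvd_imp_eq)
qed

lemma root_bound:
  fixes L :: "'a::field poly"
  assumes "degree L < n"
  shows "card {x. x ^ n + poly L x = 0} \<le> n"
proof -
  define P where "P = monom 1 n + L"
  have dm: "degree (monom (1::'a) n) = n" by (simp add: degree_monom_eq)
  have dP: "degree P = n" unfolding P_def using assms dm by (metis degree_add_eq_left)
  have "P \<noteq> 0" using dP assms by auto
  hence "card {x. poly P x = 0} \<le> degree P" by (rule card_poly_roots_bound)
  moreover have "poly P x = x ^ n + poly L x" for x by (simp add: P_def poly_monom)
  ultimately show ?thesis using dP by simp
qed

lemma fiber_card:
  fixes f :: "'a::{finite,ab_group_add} \<Rightarrow> 'b::ab_group_add"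
  assumes add: "\<And>x y. f (x + y) = f x + f y"
  shows "b \<in> range f \<Longrightarrow> card (f -` {b}) = card (f -` {0})"
    and "card (UNIV::'a set) = card (range f) * card (f -` {0})"
proof -
  have f0: "f 0 = 0" using add[of 0 0] by simp
  have fm: "f (x - y) = f x - f y" for x y using add[of "x - y" y] by (simp add: algebra_simps)
  have fib: "card (f -` {f y}) = card (f -` {0})" for y
  proof -
    have "f -` {f y} = (\<lambda>z. y + z) ` (f -` {0})"
    proof
      show "f -` {f y} \<subseteq> (\<lambda>z. y + z) ` (f -` {0})"
      proof
        fix x assume "x \<in> f -` {f y}"
        hence "x - y \<in> f -` {0}" by (simp add: fm)
        thus "x \<in> (\<lambda>z. y + z) ` (f -` {0})" by (rule rev_image_eqI) simp
      qed
    qed (auto simp: add)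
    moreover have "inj ((\<lambda>z. y + z)::'a \<Rightarrow> 'a)" by (rule injI) simp
    ultimately show ?thesis by (simp add: card_image inj_on_subset)
  qed
  show "b \<in> range f \<Longrightarrow> card (f -` {b}) = card (f -` {0})" using fib by auto
  have "card (\<Union>b\<in>range f. f -` {b}) = (\<Sum>b\<in>range f. card (f -` {b}))"
    by (rule card_UN_disjoint) auto
  moreover have "(\<Union>b\<in>range f. f -` {b}) = UNIV" by auto
  ultimately have "card (UNIV::'a set) = (\<Sum>b\<in>range f. card (f -` {b}))" by simp
  also have "\<dots> = (\<Sum>b\<in>range f. card (f -` {0}))" using fib by (intro sum.cong) auto
  finally show "card (UNIV::'a set) = card (range f) * card (f -` {0})" by simp
qed

lemma char_one: "mult_char \<phi> \<Longrightarrow> \<phi> (1::'a::field) = 1"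
proof -
  assume m: "mult_char \<phi>"
  have "\<phi> 1 = \<phi> 1 * \<phi> (1::'a)" using m unfolding mult_char_def by (metis mult_1 one_neq_zero)
  moreover have "\<phi> (1::'a) \<noteq> 0" using m unfolding mult_char_def by simp
  ultimately show ?thesis by (metis mult_cancel_left2)
qed

lemma char_mult: "mult_char \<phi> \<Longrightarrow> x \<noteq> 0 \<Longrightarrow> y \<noteq> 0 \<Longrightarrow> \<phi> ((x::'a::field) * y) = \<phi> x * \<phi> y"
  unfolding mult_char_def by blast

lemma char_pow: "mult_char \<phi> \<Longrightarrow> (x::'a::field) \<noteq> 0 \<Longrightarrow> \<phi> (x ^ n) = \<phi> x ^ n"
  by (induction n) (auto simp: char_one char_mult)

lemma char_norm:
  assumes m: "mult_char \<phi>" and x: "(x::'a::{finite,field}) \<noteq> 0"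
  shows "cmod (\<phi> x) = 1"
proof -
  define n where "n = card (UNIV::'a set) - 1"
  have c2: "card (UNIV::'a set) \<ge> 2"
  proof -
    have "card {0::'a, 1} \<le> card (UNIV::'a set)" by (rule card_mono) auto
    thus ?thesis by simp
  qed
  hence n0: "n > 0" unfolding n_def by simp
  have "x * x ^ n = x * 1" using ff_power_card[of x] c2 unfolding n_def
    by (metis Suc_diff_1 less_le_trans mult.right_neutral pos2 power_Suc)
  hence "x ^ n = 1" using x by simp
  hence "\<phi> x ^ n = 1" using char_pow[OF m x, of n] char_one[OF m] by simp
  hence e: "cmod (\<phi> x) ^ n = 1" by (metis norm_one norm_power)
  show ?thesis
  proof (rule ccontr)
    assume ne: "cmod (\<phi> x) \<noteq> 1"
    show False
    proof (cases "cmod (\<phi> x) < 1")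
      case True
      hence "cmod (\<phi> x) ^ n < 1 ^ n" using n0 by (intro power_strict_mono) auto
      thus False using e by simp
    next
      case False
      hence "1 < cmod (\<phi> x)" using ne by simp
      hence "1 < cmod (\<phi> x) ^ n" using n0 by (intro one_less_power) auto
      thus False using e by simp
    qed
  qed
qed

lemma char_cnj:
  assumes m: "mult_char \<phi>" and y: "(y::'a::{finite,field}) \<noteq> 0"
  shows "cnj (\<phi> y) = \<phi> (inverse y)"
proof -
  have "\<phi> y * cnj (\<phi> y) = 1" using complex_norm_square[of "\<phi> y"] char_norm[OF m y] by simp
  moreover have "\<phi> y * \<phi> (inverse y) = 1" using char_mult[OF m y, of "inverse y"] y char_one[OF m] by simp
  ultimately show ?thesis by (metis mult.commute mult.left_neutral mult.assoc)
qed

lemma char_sum_zero: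
  assumes m: "mult_char \<phi>" and fin: "finite H" and H0: "0 \<notin> H" and g: "g \<in> H" "\<phi> g \<noteq> 1"
    and cl1: "\<And>x. x \<in> H \<Longrightarrow> g * x \<in> H" and cl2: "\<And>x. x \<in> H \<Longrightarrow> x / g \<in> H"
  shows "(\<Sum>x\<in>H. \<phi> (x::'a::field)) = 0"
proof -
  have g0: "g \<noteq> 0" using g H0 by auto
  have "(\<Sum>x\<in>H. \<phi> (g * x)) = (\<Sum>x\<in>H. \<phi> x)"
    by (rule sum.reindex_bij_witness[of _ "\<lambda>x. x / g" "\<lambda>x. g * x"]) (use g0 cl1 cl2 in auto)
  moreover have "(\<Sum>x\<in>H. \<phi> (g * x)) = \<phi> g * (\<Sum>x\<in>H. \<phi> x)"
    unfolding sum_distrib_left using H0 g0 by (intro sum.cong refl char_mult[OF m]) auto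
  ultimately have "(\<phi> g - 1) * (\<Sum>x\<in>H. \<phi> x) = 0" by (simp add: algebra_simps)
  thus ?thesis using g by simp
qed

context
  fixes p t s r q :: nat and Tr :: "'a::{finite,field} \<Rightarrow> 'a"
  assumes pp: "prime p" and tpos: "t > 0" and spos: "s > 0" and pns: "\<not> p dvd s"
    and rdef: "r = p ^ t" and qdef: "q = r ^ s" and card: "card (UNIV :: 'a set) = q"
    and Trdef: "Tr = trace_map r s"
begin

lemma charp: "CHAR('a) = p"
  using ff_char[OF pp, of "t*s"] card qdef rdef by (simp add: power_mult)

lemma r_ge2: "r \<ge> 2"
proof -
  have "p ^ 1 \<le> p ^ t" using tpos prime_gt_0_nat[OF pp] by (intro power_increasing) auto
  thus ?thesis using rdef prime_ge_2_nat[OF pp] by simp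
qed

lemma frob: "(x + y :: 'a) ^ (r ^ i) = x ^ (r ^ i) + y ^ (r ^ i)"
  by (rule freshmans_dream') (use charp pp rdef in \<open>auto simp: power_mult[symmetric]\<close>)

lemma frob_sum: "(sum (f::'b \<Rightarrow> 'a) A) ^ r = (\<Sum>i\<in>A. f i ^ r)"
  by (rule freshmans_dream_sum') (use charp pp rdef in auto)

lemma pow_q: "(x::'a) ^ (r ^ s) = x"
  using ff_power_card[of x] card qdef by simp

lemma Fr_pow: "(a::'a) ^ r = a \<Longrightarrow> a ^ (r ^ i) = a"
  by (induction i) (auto simp: power_mult)

lemma Tr_add: "Tr (x + y) = Tr x + Tr y"
  by (simp add: Trdef trace_map_def frob sum.distrib)

lemma Tr_scale: "(a::'a) ^ r = a \<Longrightarrow> Tr (a * x) = a * Tr x"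
  by (simp add: Trdef trace_map_def power_mult_distrib Fr_pow sum_distrib_left)

lemma Tr_one: "Tr 1 = of_nat s"
  by (simp add: Trdef trace_map_def)

lemma Tr_zero: "Tr 0 = 0"
  using r_ge2 by (simp add: Trdef trace_map_def power_0_left)

lemma Tr_in: "Tr x ^ r = Tr x"
proof -
  obtain s' where s': "s = Suc s'" using spos by (cases s) auto
  have "Tr x ^ r = (\<Sum>i<s. x ^ (r ^ Suc i))"
    by (simp add: Trdef trace_map_def frob_sum power_mult[symmetric] mult.commute)
  also have "\<dots> = (\<Sum>i<s'. x ^ (r ^ Suc i)) + x"
    using pow_q[of x] s' by simp
  also have "\<dots> = (\<Sum>i<s. x ^ (r ^ i))"
    unfolding s' sum.lessThan_Suc_shift by simp
  finally show ?thesis by (simp add: Trdef trace_map_def)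
qed

lemma Fr_sub: "(x::'a) ^ r = x \<Longrightarrow> y ^ r = y \<Longrightarrow> (x - y) ^ r = x - y"
proof -
  assume a: "x ^ r = x" "y ^ r = y"
  have "x = (x - y) ^ r + y" using frob[of "x - y" y 1] a by simp
  thus ?thesis by (simp add: eq_diff_eq)
qed

lemma Fr_add: "(x::'a) ^ r = x \<Longrightarrow> y ^ r = y \<Longrightarrow> (x + y) ^ r = x + y"
  using frob[of x y 1] by simp

lemma Fr_mult: "(x::'a) ^ r = x \<Longrightarrow> y ^ r = y \<Longrightarrow> (x * y) ^ r = x * y"
  by (simp add: power_mult_distrib)

lemma Fr_div: "(x::'a) ^ r = x \<Longrightarrow> y ^ r = y \<Longrightarrow> (x / y) ^ r = x / y"
  by (simp add: power_divide)

lemma Fr_of_nat: "(of_nat n :: 'a) ^ r = of_nat n"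
proof (induction n)
  case 0 show ?case using r_ge2 by simp
next
  case (Suc n) thus ?case using Fr_add[of "of_nat n" 1] by (simp add: add.commute)
qed

lemma card_Fr_le: "card {x::'a. x ^ r = x} \<le> r"
proof -
  have "card {x::'a. x ^ r + poly [:0,-1:] x = 0} \<le> r"
    by (rule root_bound) (use r_ge2 in auto)
  moreover have "{x::'a. x ^ r + poly [:0,-1:] x = 0} = {x::'a. x ^ r = x}" by auto
  ultimately show ?thesis by simp
qed

lemma card_ker_le: "card {x::'a. Tr x = 0} \<le> r ^ (s - 1)"
proof -
  define L :: "'a poly" where "L = (\<Sum>i<s-1. monom 1 (r ^ i))"
  have "degree L \<le> r ^ (s - 1) - 1" unfolding L_def
  proof (rule degree_sum_le)
    fix i assume "i \<in> {..<s-1}"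
    hence "r ^ i < r ^ (s - 1)" using r_ge2 by (intro power_strict_increasing) auto
    thus "degree (monom (1::'a) (r ^ i)) \<le> r ^ (s - 1) - 1" by (simp add: degree_monom_eq)
  qed auto
  moreover have "r ^ (s - 1) > 0" using r_ge2 by simp
  ultimately have "degree L < r ^ (s - 1)" by linarith
  hence "card {x::'a. x ^ (r ^ (s - 1)) + poly L x = 0} \<le> r ^ (s - 1)" by (rule root_bound)
  moreover have "Tr x = x ^ (r ^ (s - 1)) + poly L x" for x
  proof -
    have "Tr x = (\<Sum>i<Suc (s-1). x ^ (r ^ i))" using spos by (simp add: Trdef trace_map_def)
    thus ?thesis by (simp add: L_def poly_sum poly_monom)
  qed
  ultimately show ?thesis by simp
qed

lemma Tr_diff: "Tr (x - y) = Tr x - Tr y"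
  using Tr_add[of "x - y" y] by (simp add: eq_diff_eq)

lemma nat_squeeze:
  fixes a b c m :: nat
  assumes "a \<le> c" "b \<le> m" "a * b = c * m" "c > 0" "m > 0"
  shows "a = c \<and> b = m"
proof -
  have "a * b \<le> a * m" using assms(2) by simp
  moreover have "a * m \<le> c * m" using assms(1) by simp
  ultimately have am: "a * m = c * m" using assms(3) by linarith
  hence "a = c" using assms(5) by simp
  hence "a * b = a * m" using am assms(3) by simp
  thus ?thesis using \<open>a = c\<close> assms(4) by simp
qed

lemma range_Tr_card:
  shows "range Tr = {x. x ^ r = x}" and "card {x::'a. x ^ r = x} = r"
    and "card {x. Tr x = 0} = r ^ (s - 1)"
proof -
  have add: "\<And>x y. Tr (x + y) = Tr x + Tr y" by (rule Tr_add)
  have q: "q = card (range Tr) * card (Tr -` {0})" using fiber_card(2)[OF add] card by simp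
  have sub: "range Tr \<subseteq> {x. x ^ r = x}" using Tr_in by auto
  have "card (range Tr) \<le> card {x::'a. x ^ r = x}" by (rule card_mono[OF _ sub]) simp
  hence c1: "card (range Tr) \<le> r" using card_Fr_le by linarith
  have c2: "card (Tr -` {0}) \<le> r ^ (s - 1)" using card_ker_le by (simp add: vimage_def)
  have "q = r * r ^ (s - 1)" using qdef spos by (cases s) auto
  hence sq: "card (range Tr) = r \<and> card (Tr -` {0}) = r ^ (s - 1)"
    using nat_squeeze[OF c1 c2] q r_ge2 by simp
  thus "card {x. Tr x = 0} = r ^ (s - 1)" by (simp add: vimage_def)
  have "card (range Tr) \<le> card {x::'a. x ^ r = x}" by (rule card_mono[OF _ sub]) simp
  hence "card {x::'a. x ^ r = x} = r" using sq card_Fr_le by linarith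
  thus "card {x::'a. x ^ r = x} = r" .
  show "range Tr = {x. x ^ r = x}"
    by (rule card_subset_eq[OF _ sub]) (use sq \<open>card {x::'a. x ^ r = x} = r\<close> in auto)
qed

lemma card_fib: "c ^ r = c \<Longrightarrow> card {x. Tr x = c} = r ^ (s - 1)"
proof -
  assume "c ^ r = c"
  hence "c \<in> range Tr" using range_Tr_card(1) by auto
  hence "card (Tr -` {c}) = card (Tr -` {0})" by (rule fiber_card(1)[OF Tr_add])
  thus ?thesis using range_Tr_card(3) by (simp add: vimage_def)
qed

lemma card_fib2:
  assumes u: "u ^ r \<noteq> u" and c: "c ^ r = c" and d: "d ^ r = d"
  shows "card {y. Tr y = c \<and> Tr (u * y) = d} * r ^ 2 = q"
proof -
  define g where "g y = (Tr y, Tr (u * y))" for y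
  have gadd: "g (x + y) = g x + g y" for x y by (simp add: g_def Tr_add distrib_left)
  have "(1::'a) \<in> range Tr" using range_Tr_card(1) by simp
  then obtain y0 where y0: "Tr y0 = 1" by auto
  define \<alpha> where "\<alpha> = Tr (u * y0)"
  have \<alpha>r: "\<alpha> ^ r = \<alpha>" unfolding \<alpha>_def by (rule Tr_in)
  have "\<exists>z. Tr z = 0 \<and> Tr (u * z) \<noteq> 0"
  proof (rule ccontr)
    assume "\<not> ?thesis"
    hence h: "Tr z = 0 \<Longrightarrow> Tr (u * z) = 0" for z by blast
    have key: "Tr ((u - \<alpha>) * w) = 0" for w
    proof -
      have "Tr (w - Tr w * y0) = 0" using Tr_diff Tr_scale[OF Tr_in] y0 by simp
      hence "Tr (u * (w - Tr w * y0)) = 0" by (rule h)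
      hence "Tr (u * w) - Tr (Tr w * (u * y0)) = 0"
        by (simp add: Tr_diff right_diff_distrib mult.left_commute)
      hence e: "Tr (u * w) = Tr w * \<alpha>" by (simp add: Tr_scale[OF Tr_in] \<alpha>_def)
      have "Tr ((u - \<alpha>) * w) = Tr (u * w) - Tr (\<alpha> * w)" by (simp add: left_diff_distrib Tr_diff)
      also have "\<dots> = Tr w * \<alpha> - \<alpha> * Tr w" by (simp add: e Tr_scale[OF \<alpha>r])
      finally show ?thesis by simp
    qed
    have "u - \<alpha> \<noteq> 0" using u \<alpha>r by auto
    hence "Tr ((u - \<alpha>) * (y0 / (u - \<alpha>))) = Tr y0" by simp
    thus False using key[of "y0 / (u - \<alpha>)"] y0 by simp
  qed
  then obtain z where z: "Tr z = 0" "Tr (u * z) \<noteq> 0" by blast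
  define \<beta> where "\<beta> = Tr (u * z)"
  have \<beta>r: "\<beta> ^ r = \<beta>" unfolding \<beta>_def by (rule Tr_in)
  have rg: "range g = {x. x ^ r = x} \<times> {x. x ^ r = x}"
  proof
    show "range g \<subseteq> {x. x ^ r = x} \<times> {x. x ^ r = x}" by (auto simp: g_def Tr_in)
    show "{x. x ^ r = x} \<times> {x. x ^ r = x} \<subseteq> range g"
    proof
      fix ab :: "'a \<times> 'a" assume "ab \<in> {x::'a. x ^ r = x} \<times> {x. x ^ r = x}"
      then obtain a b :: 'a where ab: "ab = (a, b)" "a ^ r = a" "b ^ r = b" by auto
      define \<gamma> where "\<gamma> = (b - a * \<alpha>) / \<beta>"
      have \<gamma>r: "\<gamma> ^ r = \<gamma>" unfolding \<gamma>_def
        by (intro Fr_div Fr_sub Fr_mult ab \<alpha>r \<beta>r)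
      have "Tr (a * y0 + \<gamma> * z) = a"
        using Tr_add Tr_scale[OF ab(2)] Tr_scale[OF \<gamma>r] y0 z by simp
      moreover have "Tr (u * (a * y0 + \<gamma> * z)) = b"
      proof -
        have "Tr (u * (a * y0 + \<gamma> * z)) = Tr (a * (u * y0)) + Tr (\<gamma> * (u * z))"
          by (simp add: Tr_add distrib_left mult.left_commute)
        also have "\<dots> = a * \<alpha> + \<gamma> * \<beta>"
          by (simp add: Tr_scale[OF ab(2)] Tr_scale[OF \<gamma>r] \<alpha>_def \<beta>_def)
        also have "\<dots> = b" using z(2) by (simp add: \<gamma>_def \<beta>_def)
        finally show ?thesis .
      qed
      ultimately have "g (a * y0 + \<gamma> * z) = ab" by (simp add: g_def ab)
      thus "ab \<in> range g" by (metis rangeI)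
    qed
  qed
  have cr: "card (range g) = r ^ 2"
    using rg range_Tr_card(2) by (simp add: card_cartesian_product power2_eq_square)
  have "(c, d) \<in> range g" using rg c d by auto
  hence "card (g -` {(c, d)}) = card (g -` {0})" by (rule fiber_card(1)[OF gadd])
  moreover have "q = card (range g) * card (g -` {0})" using fiber_card(2)[OF gadd] card by simp
  moreover have "g -` {(c, d)} = {y. Tr y = c \<and> Tr (u * y) = d}" by (auto simp: g_def)
  ultimately show ?thesis using cr by (simp add: mult.commute)
qed


lemma main_inner:
  fixes \<phi> :: "'a \<Rightarrow> complex"
  assumes mc: "mult_char \<phi>" and nt: "\<not> trivial_char_on (UNIV - {0}) \<phi>"
  shows "let B = (\<Sum>x\<in>{x::'a. x \<noteq> 0 \<and> trace_map r s (x + 1) = 0}. \<phi> x) in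
         (\<not> trivial_char_on (subfield_of_order r - {0}) (\<lambda>x. cnj (\<phi> x))
            \<longrightarrow> cmod B = sqrt q / sqrt r)
       \<and> (trivial_char_on (subfield_of_order r - {0}) (\<lambda>x. cnj (\<phi> x))
            \<longrightarrow> cmod B = sqrt q / r)"
proof -
  define c :: 'a where "c = - of_nat s"
  have sne: "(of_nat s :: 'a) \<noteq> 0" using pns charp by (simp add: of_nat_eq_0_iff_char_dvd)
  hence c0: "c \<noteq> 0" by (simp add: c_def)
  have cr: "c ^ r = c" unfolding c_def using Fr_sub[of 0 "of_nat s", OF _ Fr_of_nat] r_ge2 by simp
  define T where "T = {x::'a. Tr x = c}"
  have Teq: "{x::'a. x \<noteq> 0 \<and> trace_map r s (x + 1) = 0} = T"
  proof -
    have "Tr (x + 1) = 0 \<longleftrightarrow> Tr x = c" for x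
      using Tr_add[of x 1] Tr_one by (auto simp: c_def eq_neg_iff_add_eq_0)
    moreover have "Tr x = c \<Longrightarrow> x \<noteq> 0" for x using Tr_zero c0 by auto
    ultimately show ?thesis unfolding T_def Trdef[symmetric] by blast
  qed
  have T0: "0 \<notin> T" using Tr_zero c0 by (auto simp: T_def)
  define Fr where "Fr = {x::'a. x ^ r = x}"
  define U where "U = (UNIV - {0::'a})"
  define B where "B = (\<Sum>x\<in>T. \<phi> x)"
  define N where "N u = card {y. Tr y = c \<and> Tr (u * y) = c}" for u
  have step1: "B * cnj B = (\<Sum>u\<in>U. \<phi> u * of_nat (N u))"
  proof -
    have "B * cnj B = (\<Sum>x\<in>T. \<Sum>y\<in>T. \<phi> x * cnj (\<phi> y))"
      by (simp add: B_def sum_product)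
    also have "\<dots> = (\<Sum>y\<in>T. \<Sum>x\<in>T. \<phi> (x / y))"
    proof -
      have h: "\<phi> x * cnj (\<phi> y) = \<phi> (x / y)" if "x \<in> T" "y \<in> T" for x y
      proof -
        have "x \<noteq> 0" "y \<noteq> 0" using that T0 by auto
        thus ?thesis by (simp add: char_cnj[OF mc] char_mult[OF mc] divide_inverse)
      qed
      show ?thesis by (subst sum.swap) (intro sum.cong refl h; assumption)
    qed
    also have "\<dots> = (\<Sum>y\<in>T. \<Sum>u\<in>U. if Tr (u * y) = c then \<phi> u else 0)"
    proof (rule sum.cong[OF refl])
      fix y assume y: "y \<in> T"
      hence y0: "y \<noteq> 0" using T0 by auto
      have "(\<Sum>u\<in>U. if Tr (u * y) = c then \<phi> u else 0) = (\<Sum>u\<in>{u\<in>U. Tr (u * y) = c}. \<phi> u)"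
        by (simp add: sum.If_cases Int_def)
      also have "\<dots> = (\<Sum>x\<in>T. \<phi> (x / y))"
        by (rule sum.reindex_bij_witness[of _ "\<lambda>x. x / y" "\<lambda>u. u * y"])
           (use y0 T0 in \<open>auto simp: T_def U_def\<close>)
      finally show "(\<Sum>x\<in>T. \<phi> (x / y)) = (\<Sum>u\<in>U. if Tr (u * y) = c then \<phi> u else 0)" by simp
    qed
    also have "\<dots> = (\<Sum>u\<in>U. \<Sum>y\<in>T. if Tr (u * y) = c then \<phi> u else 0)"
      by (rule sum.swap)
    also have "\<dots> = (\<Sum>u\<in>U. \<phi> u * of_nat (N u))"
    proof (intro sum.cong refl)
      fix u
      have "(\<Sum>y\<in>T. if Tr (u * y) = c then \<phi> u else 0) = (\<Sum>y\<in>{y\<in>T. Tr (u * y) = c}. \<phi> u)"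
        by (simp add: sum.If_cases Int_def)
      also have "{y\<in>T. Tr (u * y) = c} = {y. Tr y = c \<and> Tr (u * y) = c}" by (auto simp: T_def)
      finally show "(\<Sum>y\<in>T. if Tr (u * y) = c then \<phi> u else 0) = \<phi> u * of_nat (N u)"
        by (simp add: N_def mult.commute)
    qed
    finally show ?thesis .
  qed
  have q_r: "real q = real r * real r ^ (s - 1)" using qdef spos by (cases s) auto
  have rpos: "real r > 0" using r_ge2 by simp
  have cardT: "card T = r ^ (s - 1)" unfolding T_def by (rule card_fib[OF cr])
  have N1: "N 1 = r ^ (s - 1)" using cardT by (simp add: N_def T_def)
  have Nz: "N u = 0" if "u \<in> Fr" "u \<noteq> 1" for u
  proof -
    have "\<not> (Tr y = c \<and> Tr (u * y) = c)" for y
    proof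
      assume "Tr y = c \<and> Tr (u * y) = c"
      hence "u * c = c" using Tr_scale[of u y] that(1) by (simp add: Fr_def)
      thus False using c0 that(2) by simp
    qed
    thus ?thesis by (simp add: N_def)
  qed
  have Nn: "real (N u) = real q / real r ^ 2" if "u \<notin> Fr" for u
  proof -
    have "N u * r ^ 2 = q" unfolding N_def by (rule card_fib2) (use that cr in \<open>auto simp: Fr_def\<close>)
    hence "real (N u) * real r ^ 2 = real q" by (metis of_nat_mult of_nat_power)
    thus ?thesis using rpos by (simp add: field_simps)
  qed
  define S where "S = (\<Sum>u\<in>U \<inter> Fr. \<phi> u)"
  have sumU: "(\<Sum>u\<in>U. \<phi> u) = 0"
  proof -
    obtain g where g: "g \<in> U" "\<phi> g \<noteq> 1" using nt by (auto simp: trivial_char_on_def U_def)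
    show ?thesis by (rule char_sum_zero[OF mc _ _ g]) (use g in \<open>auto simp: U_def\<close>)
  qed
  have finU: "finite U" by simp
  have split: "(\<Sum>u\<in>U. \<phi> u * of_nat (N u)) = (\<Sum>u\<in>U \<inter> Fr. \<phi> u * of_nat (N u)) + (\<Sum>u\<in>U - Fr. \<phi> u * of_nat (N u))"
    by (rule sum.Int_Diff[OF finU])
  have p1: "(\<Sum>u\<in>U \<inter> Fr. \<phi> u * of_nat (N u)) = of_real (real q / real r)"
  proof -
    have oneU: "1 \<in> U \<inter> Fr" using r_ge2 by (simp add: U_def Fr_def)
    have "(\<Sum>u\<in>U \<inter> Fr. \<phi> u * of_nat (N u)) = \<phi> 1 * of_nat (N 1) + (\<Sum>u\<in>U \<inter> Fr - {1}. \<phi> u * of_nat (N u))"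
      by (rule sum.remove[OF _ oneU]) simp
    also have "(\<Sum>u\<in>U \<inter> Fr - {1}. \<phi> u * of_nat (N u)) = 0" using Nz by (intro sum.neutral) auto
    finally show ?thesis using N1 char_one[OF mc] q_r rpos by simp
  qed
  have p2: "(\<Sum>u\<in>U - Fr. \<phi> u * of_nat (N u)) = - of_real (real q / real r ^ 2) * S"
  proof -
    have "(\<Sum>u\<in>U - Fr. \<phi> u * of_nat (N u)) = (\<Sum>u\<in>U - Fr. of_real (real q / real r ^ 2) * \<phi> u)"
    proof (intro sum.cong refl)
      fix u assume "u \<in> U - Fr"
      hence "of_nat (N u) = (of_real (real (N u)) :: complex)" by simp
      also have "\<dots> = of_real (real q / real r ^ 2)" using Nn \<open>u \<in> U - Fr\<close> by simp
      finally show "\<phi> u * of_nat (N u) = of_real (real q / real r ^ 2) * \<phi> u" by simp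
    qed
    also have "\<dots> = of_real (real q / real r ^ 2) * (\<Sum>u\<in>U - Fr. \<phi> u)" by (simp add: sum_distrib_left)
    also have "(\<Sum>u\<in>U - Fr. \<phi> u) = - S"
      using sum.Int_Diff[OF finU, of \<phi> Fr] sumU by (simp add: S_def eq_neg_iff_add_eq_0 add.commute)
    finally show ?thesis by simp
  qed
  have BB: "B * cnj B = of_real (real q / real r) - of_real (real q / real r ^ 2) * S"
    using step1 split p1 p2 by simp
  have cm: "cmod B = sqrt (Re (B * cnj B))"
    using complex_norm_square[of B] by (metis Re_complex_of_real norm_ge_zero real_sqrt_abs abs_of_nonneg)
  have Feq: "subfield_of_order r - {0} = U \<inter> Fr" by (auto simp: subfield_of_order_def U_def Fr_def)
  have finF: "finite (U \<inter> Fr)" by simp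
  show ?thesis
    unfolding Let_def Teq B_def[symmetric] Feq
  proof (intro conjI impI)
    assume "\<not> trivial_char_on (U \<inter> Fr) (\<lambda>x. cnj (\<phi> x))"
    then obtain g where g: "g \<in> U \<inter> Fr" "cnj (\<phi> g) \<noteq> 1" by (auto simp: trivial_char_on_def)
    have g1: "\<phi> g \<noteq> 1" using g(2) by auto
    have "S = 0" unfolding S_def
      by (rule char_sum_zero[OF mc finF _ g(1) g1])
         (use g(1) in \<open>auto simp: U_def Fr_def Fr_mult Fr_div\<close>)
    hence "Re (B * cnj B) = real q / real r" using BB by simp
    thus "cmod B = sqrt q / sqrt r" using cm by (simp add: real_sqrt_divide)
  next
    assume "trivial_char_on (U \<inter> Fr) (\<lambda>x. cnj (\<phi> x))"
    hence one: "\<phi> u = 1" if "u \<in> U \<inter> Fr" for u using that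
      by (auto simp: trivial_char_on_def)
    have "card (U \<inter> Fr) = r - 1"
    proof -
      have "U \<inter> Fr = Fr - {0}" by (auto simp: U_def)
      moreover have "0 \<in> Fr" using r_ge2 by (simp add: Fr_def)
      ultimately show ?thesis using range_Tr_card(2) by (simp add: Fr_def)
    qed
    hence "S = of_real (real r - 1)" unfolding S_def using one r_ge2 by (simp add: of_nat_diff)
    hence "Re (B * cnj B) = real q / real r - real q / real r ^ 2 * (real r - 1)" using BB by simp
    also have "\<dots> = real q / real r ^ 2" using rpos by (simp add: field_simps power2_eq_square)
    finally show "cmod B = sqrt q / r" using cm by (simp add: real_sqrt_divide)
  qed
qed

end

theorem mainTheorem5:
  fixes \<phi> :: "'a::{finite,field} \<Rightarrow> complex"
    and p t s r q :: nat
  assumes "prime p" and "odd p" and "t > 0" and "s > 0" and "\<not> p dvd s"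
    and "r = p ^ t" and "q = r ^ s" and "card (UNIV :: 'a set) = q"
    and "mult_char \<phi>"
    and "\<not> trivial_char_on (UNIV - {0}) \<phi>"
  shows "let B = (\<Sum>x\<in>{x::'a. x \<noteq> 0 \<and> trace_map r s (x + 1) = 0}. \<phi> x) in
         (\<not> trivial_char_on (subfield_of_order r - {0}) (\<lambda>x. cnj (\<phi> x))
            \<longrightarrow> cmod B = sqrt q / sqrt r)
       \<and> (trivial_char_on (subfield_of_order r - {0}) (\<lambda>x. cnj (\<phi> x))
            \<longrightarrow> cmod B = sqrt q / r)"
  by (rule main_inner[OF assms(1,3,4,5,6,7,8) refl assms(9,10)])

end
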